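(* Let $R$ be a commutative multiplicative hyperring with identity $1$ having the zero absorbing property, let $\alpha$ be a good endomorphism of $R$, and let $A$ be a hyperideal of $R$. Then: (1) if $\alpha(1)=1$, then $\sqrt[\alpha]{A}=R$ if and only if $A=R$; (2) if $A$ is $\alpha$-prime, then $\sqrt[\alpha]{A^n}=\sqrt[\alpha]{A}$ for all $n\in\mathbb N$.
   Context: A multiplicative hyperring is an abelian group $(R,+)$ with a hyperoperation $\circ:R\times R\to \mathcal P^*(R)$ (nonempty subsets) such that $a\circ(b\circ c)=(a\circ b)\circ c$, $a\circ(b+c)\subseteq a\circ b+a\circ c$, $(b+c)\circ a\subseteq b\circ a+c\circ a$, and $a\circ(-b)=(-a)\circ b=-(a\circ b)$. Products of subsets are unions of elementwise products; for an element or subset $X$, $X^n=X\circ\cdots\circ X$ ($n$ factors). Commutative means $a\circ b=b\circ a$. An identity $1$ satisfies $a\in1\circ a$ for all $a$. $R$ has the zero absorbing property if $0\circ r=r\circ0=\{0\}$ for all $r$. A hyperideal is a nonempty $I$ closed under subtraction with $r\circ x\subseteq I$ for $r\in R$, $x\in I$. Standing assumption: all hyperideals are $\mathbf C$-hyperideals, i.e. for every finite product $A=r_1\circ\cdots\circ r_n$, $A\cap I\ne\emptyset$ implies $A\subseteq I$. A good endomorphism $\alpha$ satisfies $\alpha(x+y)=\alpha(x)+\alpha(y)$ and $\alpha(x\circ y)=\alpha(x)\circ\alpha(y)$; it is applied to sets elementwise. The $\alpha$-radical is $\sqrt[\alpha]{J}=\{r\in R:\alpha(r^n)\subseteq J\text{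 for some }n\in\mathbb N\}$. A hyperideal $I$ is $\alpha$-prime if for all $x,y$, $x\circ y\subseteq I$ implies $x\in I$ or $\alpha(y)\in I$. *)

theory Defs
  imports Main
begin

text \<open>The additive group (R,+) is the ambient type 'a of class ab_group_add (so R = UNIV);
  the hyperoperation is a function m :: 'a => 'a => 'a set.\<close>

definition setmult :: "('a \<Rightarrow> 'a \<Rightarrow> 'a set) \<Rightarrow> 'a set \<Rightarrow> 'a set \<Rightarrow> 'a set" where
  "setmult m X Y = (\<Union>x\<in>X. \<Union>y\<in>Y. m x y)"

definition setplus :: "'a::ab_group_add set \<Rightarrow> 'a set \<Rightarrow> 'a set" where
  "setplus X Y = {x + y | x y. x \<in> X \<and> y \<in> Y}"

definition mult_hyperring :: "('a::ab_group_add \<Rightarrow> 'a \<Rightarrow> 'a set) \<Rightarrow> bool" where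
  "mult_hyperring m \<longleftrightarrow>
     (\<forall>a b. m a b \<noteq> {}) \<and>
     (\<forall>a b c. setmult m {a} (m b c) = setmult m (m a b) {c}) \<and>
     (\<forall>a b c. m a (b + c) \<subseteq> setplus (m a b) (m a c)) \<and>
     (\<forall>a b c. m (b + c) a \<subseteq> setplus (m b a) (m c a)) \<and>
     (\<forall>a b. m a (- b) = uminus ` (m a b) \<and> m (- a) b = uminus ` (m a b))"

definition hcomm :: "('a \<Rightarrow> 'a \<Rightarrow> 'a set) \<Rightarrow> bool" where
  "hcomm m \<longleftrightarrow> (\<forall>a b. m a b = m b a)"

definition hidentity :: "('a \<Rightarrow> 'a \<Rightarrow> 'a set) \<Rightarrow> 'a \<Rightarrow> bool" where
  "hidentity m one \<longleftrightarrow> (\<forall>a. a \<in> m one a)"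

definition zero_absorbing :: "('a::zero \<Rightarrow> 'a \<Rightarrow> 'a set) \<Rightarrow> bool" where
  "zero_absorbing m \<longleftrightarrow> (\<forall>r. m 0 r = {0} \<and> m r 0 = {0})"

definition hprod :: "('a \<Rightarrow> 'a \<Rightarrow> 'a set) \<Rightarrow> 'a list \<Rightarrow> 'a set" where
  "hprod m rs = foldl (\<lambda>X y. setmult m X {y}) {hd rs} (tl rs)"

text \<open>X^n = X o ... o X (n factors), meaningful for n >= 1; value at n = 0 is an unused convention.\<close>
primrec hpow :: "('a \<Rightarrow> 'a \<Rightarrow> 'a set) \<Rightarrow> 'a set \<Rightarrow> nat \<Rightarrow> 'a set" where
  "hpow m X 0 = {}"
| "hpow m X (Suc n) = (if n = 0 then X else setmult m (hpow m X n) X)"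

definition hyperideal :: "('a::ab_group_add \<Rightarrow> 'a \<Rightarrow> 'a set) \<Rightarrow> 'a set \<Rightarrow> bool" where
  "hyperideal m I \<longleftrightarrow> I \<noteq> {} \<and> (\<forall>x\<in>I. \<forall>y\<in>I. x - y \<in> I) \<and> (\<forall>r. \<forall>x\<in>I. m r x \<subseteq> I)"

definition C_hyperideal :: "('a::ab_group_add \<Rightarrow> 'a \<Rightarrow> 'a set) \<Rightarrow> 'a set \<Rightarrow> bool" where
  "C_hyperideal m I \<longleftrightarrow> hyperideal m I \<and>
     (\<forall>rs. rs \<noteq> [] \<longrightarrow> hprod m rs \<inter> I \<noteq> {} \<longrightarrow> hprod m rs \<subseteq> I)"

definition good_endo :: "('a::ab_group_add \<Rightarrow> 'a \<Rightarrow> 'a set) \<Rightarrow> ('a \<Rightarrow> 'a) \<Rightarrow> bool" where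
  "good_endo m \<alpha> \<longleftrightarrow> (\<forall>x y. \<alpha> (x + y) = \<alpha> x + \<alpha> y) \<and> (\<forall>x y. \<alpha> ` (m x y) = m (\<alpha> x) (\<alpha> y))"

definition alpha_rad :: "('a \<Rightarrow> 'a \<Rightarrow> 'a set) \<Rightarrow> ('a \<Rightarrow> 'a) \<Rightarrow> 'a set \<Rightarrow> 'a set" where
  "alpha_rad m \<alpha> J = {r. \<exists>n\<ge>1. \<alpha> ` (hpow m {r} n) \<subseteq> J}"

definition alpha_prime :: "('a::ab_group_add \<Rightarrow> 'a \<Rightarrow> 'a set) \<Rightarrow> ('a \<Rightarrow> 'a) \<Rightarrow> 'a set \<Rightarrow> bool" where
  "alpha_prime m \<alpha> I \<longleftrightarrow> hyperideal m I \<and> (\<forall>x y. m x y \<subseteq> I \<longrightarrow> x \<in> I \<or> \<alpha> y \<in> I)"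

end

theory Submission
  imports Defs
begin

lemma setmult_iff: "w \<in> setmult m X Y \<longleftrightarrow> (\<exists>x\<in>X. \<exists>y\<in>Y. w \<in> m x y)"
  by (simp add: setmult_def)

lemma setmultI: "x \<in> X \<Longrightarrow> y \<in> Y \<Longrightarrow> w \<in> m x y \<Longrightarrow> w \<in> setmult m X Y"
  unfolding setmult_def by blast

lemma setmultE: "w \<in> setmult m X Y \<Longrightarrow> (\<And>x y. x \<in> X \<Longrightarrow> y \<in> Y \<Longrightarrow> w \<in> m x y \<Longrightarrow> P) \<Longrightarrow> P"
  unfolding setmult_def by blast

lemma setmult_assoc:
  assumes "mult_hyperring m"
  shows "setmult m X (setmult m Y Z) = setmult m (setmult m X Y) Z"
proof -
  have e0: "\<forall>a b c. setmult m {a} (m b c) = setmult m (m a b) {c}"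
    using assms unfolding mult_hyperring_def by (elim conjE) assumption
  have e: "\<And>a b c. setmult m {a} (m b c) = setmult m (m a b) {c}"
    by (rule e0[rule_format])
  show ?thesis
  proof (rule set_eqI, rule iffI)
    fix w assume "w \<in> setmult m X (setmult m Y Z)"
    then obtain x v where xv: "x \<in> X" "v \<in> setmult m Y Z" "w \<in> m x v" by (rule setmultE)
    from xv(2) obtain y z where yz: "y \<in> Y" "z \<in> Z" "v \<in> m y z" by (rule setmultE)
    have "w \<in> setmult m {x} (m y z)" by (rule setmultI[where m=m and x=x and y=v]) (simp_all add: yz xv)
    then have "w \<in> setmult m (m x y) {z}" by (simp only: e)
    then obtain u z' where u: "u \<in> m x y" "z' \<in> {z}" "w \<in> m u z'" by (rule setmultE)
    have "u \<in> setmult m X Y" by (rule setmultI[where m=m, OF xv(1) yz(1) u(1)])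
    then show "w \<in> setmult m (setmult m X Y) Z" using u yz(2) by (auto intro: setmultI[where m=m])
  next
    fix w assume "w \<in> setmult m (setmult m X Y) Z"
    then obtain u z where uz: "u \<in> setmult m X Y" "z \<in> Z" "w \<in> m u z" by (rule setmultE)
    from uz(1) obtain x y where xy: "x \<in> X" "y \<in> Y" "u \<in> m x y" by (rule setmultE)
    have "w \<in> setmult m (m x y) {z}" by (rule setmultI[where m=m and x=u and y=z]) (simp_all add: xy uz)
    then have "w \<in> setmult m {x} (m y z)" by (simp only: e)
    then obtain x' v where v: "x' \<in> {x}" "v \<in> m y z" "w \<in> m x' v" by (rule setmultE)
    have "v \<in> setmult m Y Z" by (rule setmultI[where m=m, OF xy(2) uz(2) v(2)])
    then show "w \<in> setmult m X (setmult m Y Z)" using v xy(1) by (auto intro: setmultI[where m=m])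
  qed
qed

lemma hpow_Suc: "n \<ge> 1 \<Longrightarrow> hpow m X (Suc n) = setmult m (hpow m X n) X"
  by simp

lemma hpow_1: "hpow m X 1 = X" by simp

lemma hpow_add:
  assumes "mult_hyperring m" "a \<ge> 1"
  shows "b \<ge> 1 \<Longrightarrow> hpow m X (a + b) = setmult m (hpow m X a) (hpow m X b)"
proof (induction b)
  case 0 then show ?case by simp
next
  case (Suc b)
  show ?case
  proof (cases "b = 0")
    case True then show ?thesis using assms by simp
  next
    case False
    then have "hpow m X (a + Suc b) = setmult m (hpow m X (a+b)) X" using assms by simp
    also have "\<dots> = setmult m (setmult m (hpow m X a) (hpow m X b)) X" using Suc False by simp
    also have "\<dots> = setmult m (hpow m X a) (setmult m (hpow m X b) X)"
      using setmult_assoc[OF assms(1)] by simp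
    also have "\<dots> = setmult m (hpow m X a) (hpow m X (Suc b))" using False by simp
    finally show ?thesis .
  qed
qed

lemma hpow_mult:
  assumes "mult_hyperring m" "k \<ge> 1"
  shows "n \<ge> 1 \<Longrightarrow> hpow m X (k * n) = hpow m (hpow m X k) n"
proof (induction n)
  case 0 then show ?case by simp
next
  case (Suc n)
  show ?case
  proof (cases "n = 0")
    case True then show ?thesis by simp
  next
    case False
    have "hpow m X (k * Suc n) = hpow m X (k * n + k)" by (simp add: add.commute)
    also have "\<dots> = setmult m (hpow m X (k*n)) (hpow m X k)"
      using hpow_add[OF assms(1), of "k*n" k X] False assms(2) by simp
    also have "\<dots> = hpow m (hpow m X k) (Suc n)" using Suc False by simp
    finally show ?thesis .
  qed
qed

lemma setmult_mono: "X \<subseteq> X' \<Longrightarrow> Y \<subseteq> Y' \<Longrightarrow> setmult m X Y \<subseteq> setmult m X' Y'"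
  unfolding setmult_def by blast

lemma hpow_mono: "X \<subseteq> Y \<Longrightarrow> hpow m X n \<subseteq> hpow m Y n"
proof (induction n)
  case 0 then show ?case by simp
next
  case (Suc n)
  then show ?case using setmult_mono[OF Suc.IH[OF Suc.prems] Suc.prems, of m] by simp
qed

lemma hpow_image:
  assumes "good_endo m \<alpha>"
  shows "\<alpha> ` hpow m X n = hpow m (\<alpha> ` X) n"
proof (induction n)
  case 0 then show ?case by simp
next
  case (Suc n)
  have g: "\<And>x y. \<alpha> ` (m x y) = m (\<alpha> x) (\<alpha> y)" using assms unfolding good_endo_def by blast
  have "\<alpha> ` setmult m Y Z = setmult m (\<alpha> ` Y) (\<alpha> ` Z)" for Y Z
    unfolding setmult_def image_UN using g by simp
  then show ?case using Suc by simp
qed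

lemma hpow_ideal: "hyperideal m A \<Longrightarrow> n \<ge> 1 \<Longrightarrow> hpow m A n \<subseteq> A"
proof (induction n)
  case 0 then show ?case by simp
next
  case (Suc n)
  have "setmult m X A \<subseteq> A" for X
    using Suc.prems(1) unfolding setmult_def hyperideal_def by blast
  then show ?case by simp
qed

lemma one_in_hpow: "hidentity m one \<Longrightarrow> n \<ge> 1 \<Longrightarrow> one \<in> hpow m {one} n"
proof (induction n)
  case 0 then show ?case by simp
next
  case (Suc n)
  show ?case
  proof (cases "n = 0")
    case True then show ?thesis by simp
  next
    case False
    then have "one \<in> hpow m {one} n" using Suc by simp
    moreover have "one \<in> m one one" using Suc.prems(1) unfolding hidentity_def by blast
    ultimately have "one \<in> setmult m (hpow m {one} n) {one}" unfolding setmult_def by blast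
    then show ?thesis using False by simp
  qed
qed

theorem mainTheorem14:
  fixes m :: "'a::ab_group_add \<Rightarrow> 'a \<Rightarrow> 'a set"
    and one :: 'a and \<alpha> :: "'a \<Rightarrow> 'a" and A :: "'a set"
  assumes "mult_hyperring m"
    and "hcomm m"
    and "hidentity m one"
    and "zero_absorbing m"
    and "\<forall>I. hyperideal m I \<longrightarrow> C_hyperideal m I"
    and "good_endo m \<alpha>"
    and "hyperideal m A"
  shows "(\<alpha> one = one \<longrightarrow> (alpha_rad m \<alpha> A = UNIV \<longleftrightarrow> A = UNIV))
       \<and> (alpha_prime m \<alpha> A \<longrightarrow> (\<forall>n\<ge>1. alpha_rad m \<alpha> (hpow m A n) = alpha_rad m \<alpha> A))"
proof (intro conjI impI allI)
  assume a1: "\<alpha> one = one"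
  show "alpha_rad m \<alpha> A = UNIV \<longleftrightarrow> A = UNIV"
  proof
    assume "alpha_rad m \<alpha> A = UNIV"
    then have "one \<in> alpha_rad m \<alpha> A" by simp
    then obtain n where n: "n \<ge> 1" "\<alpha> ` hpow m {one} n \<subseteq> A" unfolding alpha_rad_def by blast
    then have "one \<in> A" using one_in_hpow[OF assms(3) n(1)] a1 by force
    show "A = UNIV"
    proof (rule set_eqI)
      fix r
      have "r \<in> m one r" using assms(3) unfolding hidentity_def by blast
      also have "\<dots> = m r one" using assms(2) unfolding hcomm_def by blast
      also have "\<dots> \<subseteq> A" using \<open>one \<in> A\<close> assms(7) unfolding hyperideal_def by blast
      finally show "r \<in> A \<longleftrightarrow> r \<in> UNIV" by simp
    qed
  next
    assume "A = UNIV" then show "alpha_rad m \<alpha> A = UNIV" unfolding alpha_rad_def by auto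
  qed
next
  fix n :: nat
  assume "alpha_prime m \<alpha> A" and n: "n \<ge> 1"
    show "alpha_rad m \<alpha> (hpow m A n) = alpha_rad m \<alpha> A"
    proof
      show "alpha_rad m \<alpha> (hpow m A n) \<subseteq> alpha_rad m \<alpha> A"
        using hpow_ideal[OF assms(7) n] unfolding alpha_rad_def by blast
    next
      show "alpha_rad m \<alpha> A \<subseteq> alpha_rad m \<alpha> (hpow m A n)"
      proof
        fix r assume "r \<in> alpha_rad m \<alpha> A"
        then obtain k where k: "k \<ge> 1" "\<alpha> ` hpow m {r} k \<subseteq> A" unfolding alpha_rad_def by blast
        have "\<alpha> ` hpow m {r} (k*n) = hpow m (\<alpha> ` hpow m {r} k) n"
          using hpow_mult[OF assms(1) k(1) n] hpow_image[OF assms(6)] by simp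
        also have "\<dots> \<subseteq> hpow m A n" using hpow_mono[OF k(2)] .
        finally have "\<alpha> ` hpow m {r} (k*n) \<subseteq> hpow m A n" .
        moreover have "k * n \<ge> 1" using k n by simp
        ultimately show "r \<in> alpha_rad m \<alpha> (hpow m A n)" unfolding alpha_rad_def by blast
      qed
    qed
qed

end
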